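(* Let $n\ge1$ and let $\mathcal{C}$ be the binary $[2^n-1,n]$ simplex code. Then for every integer $s$ with $1\le s\le n-\ln n$, $\mathcal{C}$ is a functional $(s,\,2^{n-1}-\lceil s/2\rceil\cdot2^{s-1})$-batch code. Moreover, $\mathcal{C}$ can serve every multiset of request vectors $\{\mathbf{v}_1^{(a_1)},\dots,\mathbf{v}_s^{(a_s)}\}$ with $a_i\ge1$, $\sum_{i=1}^s a_i=t$, $\dim\operatorname{Span}\{\mathbf{v}_1,\dots,\mathbf{v}_s\}=s'$ and $t\le 2^{n-1}-\lceil s/2\rceil\cdot2^{s'-1}$ (in the sense that the required $t$ pairwise disjoint recovering sets exist).
   Context: The binary $[2^n-1,n]$ simplex code is the binary linear code whose $n\times(2^n-1)$ generator matrix $\mathbf{G}=[\mathbf{g}_1,\dots,\mathbf{g}_{2^n-1}]$ has as columns all nonzero vectors of $\mathbb{F}_2^n$ (each exactly once). A binary linear code with generator matrix $\mathbf{G}=[\mathbf{g}_1,\dots,\mathbf{g}_N]\in\mathbb{F}_2^{n\times N}$ with nonzero columns is a functional $(s,t)$-batch code ($1\le s\le t$) if for every multiset of request vectors $I=\{\mathbf{v}_1^{(a_1)},\dots,\mathbf{v}_s^{(a_s)}\}$, i.e. nonzero vectors $\mathbf{v}_1,\dots,\mathbf{v}_s\in\mathbb{F}_2^n$ (not necessarily distinct) with multiplicities $a_i\ge1$ and $\sum_i a_i=t$, there exist $t$ pairwise disjoint sets $R_{i,j}\subseteq[N]$ ($i\in[s]$, $j\in[a_i]$) with $\sum_{l\in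 R_{i,j}}\mathbf{g}_l=\mathbf{v}_i$ for all $i,j$. Here $\ln$ is the natural logarithm. *)

theory Defs
  imports "HOL-Analysis.Analysis" "HOL-Library.Z2"
begin

text \<open>Vectors of F_2^n are elements of type bit^'n, where n = CARD('n).
  A generator matrix with N nonzero columns is a map g from [N] = {1..N} to bit^'n.\<close>

definition simplex_gen :: "(nat \<Rightarrow> bit ^ 'n) \<Rightarrow> bool" where
  "simplex_gen g \<longleftrightarrow>
     bij_betw g {1..2 ^ CARD('n) - 1} {x :: bit ^ 'n. x \<noteq> 0}"

text \<open>Request i (i < s) is vector v i with multiplicity a i; the recovering sets
  R i j (j < a i) must be pairwise disjoint subsets of [N] summing to v i.\<close>

definition serves :: "nat \<Rightarrow> (nat \<Rightarrow> bit ^ 'n) \<Rightarrow> nat \<Rightarrow> (nat \<Rightarrow> bit ^ 'n) \<Rightarrow> (nat \<Rightarrow> nat) \<Rightarrow> bool" where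
  "serves N g s v a \<longleftrightarrow>
     (\<exists>R :: nat \<Rightarrow> nat \<Rightarrow> nat set.
        (\<forall>i<s. \<forall>j<a i. R i j \<subseteq> {1..N} \<and> (\<Sum>l\<in>R i j. g l) = v i) \<and>
        (\<forall>i<s. \<forall>j<a i. \<forall>i'<s. \<forall>j'<a i'. (i, j) \<noteq> (i', j') \<longrightarrow> R i j \<inter> R i' j' = {}))"

definition functional_batch :: "nat \<Rightarrow> (nat \<Rightarrow> bit ^ 'n) \<Rightarrow> nat \<Rightarrow> nat \<Rightarrow> bool" where
  "functional_batch N g s t \<longleftrightarrow>
     (\<forall>(v :: nat \<Rightarrow> bit ^ 'n) (a :: nat \<Rightarrow> nat).
        (\<forall>i<s. v i \<noteq> 0 \<and> 1 \<le> a i) \<and> (\<Sum>i<s. a i) = t \<longrightarrow> serves N g s v a)"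

end

theory Submission
  imports Defs
begin


lemma UNIV_bit: "(UNIV::bit set) = {0,1}" by (auto intro: bit.exhaust)
instance bit :: finite by standard (simp add: UNIV_bit)
lemma card_UNIV_bit: "card (UNIV::bit set) = 2" by (simp add: UNIV_bit)

lemma bit_add_self[simp]: "(x::bit) + x = 0" by (cases x) auto
lemma bit_add_self2[simp]: "(x::bit) + (x + y) = y" by (metis add.assoc add_0 bit_add_self)
lemma vadd_self[simp]: "(x::bit^'n) + x = 0" by (simp add: vec_eq_iff)
lemma vadd_self2[simp]: "(x::bit^'n) + (x + y) = y" by (simp add: vec_eq_iff)
lemma vadd_self3[simp]: "(y::bit^'n) + x + x = y" by (simp add: vec_eq_iff add.assoc)
lemma vminus_eq: "(x::bit^'n) - y = x + y" by (simp add: vec_eq_iff)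

lemma card_UNIV_vec: "card (UNIV::(bit^'n) set) = 2 ^ CARD('n)"
  by (simp add: card_UNIV_bit)

definition good :: "'k set \<Rightarrow> ('k \<Rightarrow> bit^'n) \<Rightarrow> ('k \<Rightarrow> bit^'n) \<Rightarrow> (bit^'n) set \<Rightarrow> bool" where
 "good K V p S \<longleftrightarrow> (\<forall>k\<in>K. p k \<in> S \<and> p k + V k \<in> S) \<and>
   (\<forall>k\<in>K. \<forall>k'\<in>K. k \<noteq> k' \<longrightarrow> {p k, p k + V k} \<inter> {p k', p k' + V k'} = {})"

lemma good_union:
  assumes "good K1 V p1 S1" "good K2 V p2 S2" "K1 \<inter> K2 = {}" "S1 \<inter> S2 = {}"
  shows "good (K1 \<union> K2) V (\<lambda>k. if k \<in> K1 then p1 k else p2 k) (S1 \<union> S2)"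
  using assms unfolding good_def
  apply (intro conjI ballI impI)
   apply auto[1]
  apply (auto simp: disjoint_iff)
  done

lemma good_mono: "good K V p S \<Longrightarrow> S \<subseteq> T \<Longrightarrow> good K V p T"
  unfolding good_def by blast

lemma good_empty: "good {} V p S" unfolding good_def by blast

definition cos :: "(bit^'n) set \<Rightarrow> bit^'n \<Rightarrow> (bit^'n) set" where
  "cos W x = (\<lambda>w. x + w) ` W"

lemma cos_add: assumes "vec.subspace W" "y \<in> cos W x" "u \<in> W" shows "y + u \<in> cos W x"
proof -
  obtain w where w: "w \<in> W" "y = x + w" using assms(2) unfolding cos_def by auto
  have "y + u = x + (w + u)" using w by (simp add: add.assoc)
  moreover have "w + u \<in> W" using vec.subspace_add[OF assms(1) w(1) assms(3)] .
  ultimately show ?thesis unfolding cos_def by auto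
qed

lemma cos_self: "vec.subspace W \<Longrightarrow> x \<in> cos W x"
  unfolding cos_def using vec.subspace_0 by force

lemma cos_eq: assumes "vec.subspace W" "y \<in> cos W x" shows "cos W y = cos W x"
proof -
  obtain w where w: "w \<in> W" "y = x + w" using assms(2) unfolding cos_def by auto
  show ?thesis
  proof
    show "cos W y \<subseteq> cos W x" using cos_add[OF assms(1) assms(2)] unfolding cos_def by auto
    show "cos W x \<subseteq> cos W y"
    proof
      fix z assume "z \<in> cos W x"
      then obtain w' where "w' \<in> W" "z = x + w'" unfolding cos_def by auto
      hence "z = y + (w + w')" using w by (simp add: add.assoc[symmetric])
      moreover have "w + w' \<in> W" using vec.subspace_add[OF assms(1) w(1) \<open>w' \<in> W\<close>] .
      ultimately show "z \<in> cos W y" unfolding cos_def by auto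
    qed
  qed
qed

lemma cos_disj: "vec.subspace W \<Longrightarrow> cos W x \<inter> cos W y \<noteq> {} \<Longrightarrow> cos W x = cos W y"
  by (metis cos_eq disjoint_iff)

lemma card_cos: "card (cos W x) = card W"
  unfolding cos_def by (rule card_image) (simp add: inj_on_def)

lemma card_cosets: assumes "vec.subspace (W::(bit^'n) set)"
  shows "card W * card (range (cos W)) = 2 ^ CARD('n)"
proof -
  have "card W * card (range (cos W)) = card (\<Union> (range (cos W)))"
    proof (rule card_partition)
    show "\<And>c. c \<in> range (cos W) \<Longrightarrow> card c = card W" by (auto simp: card_cos)
    show "\<And>c1 c2. c1 \<in> range (cos W) \<Longrightarrow> c2 \<in> range (cos W) \<Longrightarrow> c1 \<noteq> c2 \<Longrightarrow> c1 \<inter> c2 = {}"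
      using cos_disj[OF assms] by blast
  qed simp_all
  also have "\<Union> (range (cos W)) = UNIV" using cos_self[OF assms] by blast
  finally show ?thesis by (simp add: card_UNIV_bit)
qed

lemma cosets_disj: assumes "vec.subspace W" "A \<subseteq> range (cos W)" "B \<subseteq> range (cos W)" "A \<inter> B = {}"
  shows "\<Union>A \<inter> \<Union>B = {}"
  using assms cos_disj[OF assms(1)] by (smt (verit) Int_emptyI UnionE disjoint_iff image_iff subset_iff)

lemma card_span_indep:
  "finite B \<Longrightarrow> vec.independent B \<Longrightarrow> card (vec.span B) = 2 ^ card (B :: (bit^'n) set)"
proof (induction B rule: finite_induct)
  case empty thus ?case by (simp add: vec.span_empty)
next
  case (insert x B)
  have iB: "vec.independent B" and xB: "x \<notin> vec.span B"
    using insert.prems insert.hyps(2) by (auto simp: vec.independent_insert)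
  have eq: "vec.span (insert x B) = vec.span B \<union> (\<lambda>y. x + y) ` vec.span B"
  proof
    show "vec.span (insert x B) \<subseteq> vec.span B \<union> (\<lambda>y. x + y) ` vec.span B"
    proof
      fix y assume "y \<in> vec.span (insert x B)"
      then obtain k where k: "y - k *s x \<in> vec.span B" by (auto simp: vec.span_insert)
      show "y \<in> vec.span B \<union> (\<lambda>y. x + y) ` vec.span B"
      proof (cases k)
        case zero thus ?thesis using k by simp
      next
        case one
        hence "y + x \<in> vec.span B" using k by (simp add: vminus_eq)
        moreover have "y = x + (y + x)" by (simp add: vec_eq_iff add.commute)
        ultimately show ?thesis by blast
      qed
    qed
    show "vec.span B \<union> (\<lambda>y. x + y) ` vec.span B \<subseteq> vec.span (insert x B)"
      by (auto intro: vec.span_add vec.span_base vec.span_mono[THEN subsetD, of B])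
  qed
  have dj: "vec.span B \<inter> (\<lambda>y. x + y) ` vec.span B = {}"
  proof (rule ccontr)
    assume "vec.span B \<inter> (\<lambda>y. x + y) ` vec.span B \<noteq> {}"
    then obtain z y where "z \<in> vec.span B" "y \<in> vec.span B" "z = x + y" by auto
    hence "x = z + y" by simp
    hence "x \<in> vec.span B" using \<open>z \<in> _\<close> \<open>y \<in> _\<close> vec.span_add by metis
    thus False using xB by simp
  qed
  have "card ((\<lambda>y. x + y) ` vec.span B) = card (vec.span B)"
    by (rule card_image) (simp add: inj_on_def)
  hence "card (vec.span (insert x B)) = 2 * card (vec.span B)"
    unfolding eq using dj by (simp add: card_Un_disjoint)
  thus ?case using insert.IH[OF iB] insert.hyps by simp
qed

lemma card_subspace: assumes "vec.subspace (W::(bit^'n) set)" shows "card W = 2 ^ vec.dim W"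
proof -
  obtain B where B: "B \<subseteq> W" "vec.independent B" "W \<subseteq> vec.span B" "card B = vec.dim W"
    by (rule vec.basis_exists)
  have "vec.span B = W" using B vec.span_minimal[OF B(1) assms] by blast
  thus ?thesis using card_span_indep[of B] B by simp
qed



lemma nonzero_coord: "(u::bit^'n) \<noteq> 0 \<Longrightarrow> \<exists>c. u$c = 1"
  by (auto simp: vec_eq_iff)

lemma P1:
  assumes sub: "vec.subspace W" and u: "u \<in> W" "u \<noteq> 0" and cardW: "card W = 2*m"
    and KV: "\<forall>k\<in>K. V k = u" and fin: "finite K" and cK: "card K \<le> m"
  shows "\<exists>p. good K V p (cos W x)"
proof -
  obtain c where c: "u$c = 1" using nonzero_coord[OF u(2)] by blast
  define H where "H = {y \<in> cos W x. y$c = 0}"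
  have cov: "cos W x \<subseteq> (\<lambda>(h,a). h + a *s u) ` (H \<times> UNIV)"
  proof
    fix y assume y: "y \<in> cos W x"
    define h where "h = y + (y$c) *s u"
    have "h \<in> cos W x" unfolding h_def
      by (rule cos_add[OF sub y]) (rule vec.subspace_scale[OF sub u(1)])
    moreover have "h$c = 0" unfolding h_def using c by simp
    moreover have "y = h + (y$c) *s u" unfolding h_def by simp
    ultimately show "y \<in> (\<lambda>(h,a). h + a *s u) ` (H \<times> UNIV)" unfolding H_def by force
  qed
  have "card (cos W x) \<le> card ((\<lambda>(h,a). h + a *s u) ` (H \<times> (UNIV::bit set)))"
    by (rule card_mono[OF _ cov]) simp
  also have "\<dots> \<le> card (H \<times> (UNIV::bit set))" by (rule card_image_le) simp
  also have "\<dots> = card H * 2" by (simp add: card_cartesian_product card_UNIV_bit)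
  finally have "m \<le> card H" using card_cos[of W x] cardW by simp
  then obtain f where f: "f ` K \<subseteq> H" "inj_on f K"
    using card_le_inj[OF fin, of H] cK by auto
  have fc: "k \<in> K \<Longrightarrow> (f k)$c = 0" for k using f(1) unfolding H_def by auto
  have fC: "k \<in> K \<Longrightarrow> f k \<in> cos W x" for k using f(1) unfolding H_def by auto
  have "good K V f (cos W x)"
    unfolding good_def
  proof (intro conjI ballI impI)
    fix k assume k: "k \<in> K"
    show "f k \<in> cos W x" using fC[OF k] .
    show "f k + V k \<in> cos W x" using KV k cos_add[OF sub fC[OF k] u(1)] by simp
  next
    fix k k' assume k: "k \<in> K" and k': "k' \<in> K" and ne: "k \<noteq> k'"
    have "f k \<noteq> f k'" using f(2) k k' ne by (auto simp: inj_on_def)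
    moreover have "f k \<noteq> f k' + u" using fc[OF k] fc[OF k'] c by (auto simp: vec_eq_iff)
    moreover have "f k + u \<noteq> f k'" using fc[OF k] fc[OF k'] c by (auto simp: vec_eq_iff)
    ultimately show "{f k, f k + V k} \<inter> {f k', f k' + V k'} = {}"
      using KV k k' by auto
  qed
  thus ?thesis by blast
qed



lemma P2:
  assumes sub: "vec.subspace W" and u: "u \<in> W" "u \<noteq> 0" and w: "w \<in> W" "w \<noteq> 0" "u \<noteq> w"
    and cardW: "card W = 2*m"
    and Ka: "\<forall>k\<in>Ka. V k = u" and Kb: "\<forall>k\<in>Kb. V k = w"
    and fin: "finite Ka" "finite Kb" and dj: "Ka \<inter> Kb = {}"
    and cK: "card Ka + card Kb + 1 \<le> m"
  shows "\<exists>p. good (Ka \<union> Kb) V p (cos W x)"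
proof -
  obtain c where c: "u$c = 1" using nonzero_coord[OF u(2)] by blast
  define \<beta> where "\<beta> = w$c"
  define w' where "w' = w + \<beta> *s u"
  have w'c: "w'$c = 0" unfolding w'_def \<beta>_def using c by simp
  have w'W: "w' \<in> W" unfolding w'_def
    by (rule vec.subspace_add[OF sub w(1)]) (rule vec.subspace_scale[OF sub u(1)])
  have wdec: "w = \<beta> *s u + w'" unfolding w'_def by (simp add: vec_eq_iff add.commute)
  have "w' \<noteq> 0"
  proof
    assume "w' = 0"
    hence "w = \<beta> *s u" using wdec by simp
    thus False using w(2) w(3) by (cases \<beta>) auto
  qed
  then obtain c' where c': "w'$c' = 1" using nonzero_coord by blast
  define off where "off a b = a *s u + b *s w'" for a b :: bit
  have offW: "off a b \<in> W" for a b unfolding off_def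
    by (intro vec.subspace_add[OF sub] vec.subspace_scale[OF sub] u(1) w'W)
  define C where "C = cos W x"
  define H where "H = {y \<in> C. y$c = 0 \<and> y$c' = 0}"
  have key: "h + off a b = h' + off a' b' \<Longrightarrow> h \<in> H \<Longrightarrow> h' \<in> H \<Longrightarrow> h = h' \<and> a = a' \<and> b = b'"
    for h h' a a' b b'
  proof -
    assume eq: "h + off a b = h' + off a' b'" and h: "h \<in> H" and h': "h' \<in> H"
    have "(h + off a b)$c = (h' + off a' b')$c" using eq by simp
    hence aa: "a = a'" using h h' c w'c unfolding H_def off_def by (cases a; cases a') simp_all
    have "(h + off a b)$c' = (h' + off a' b')$c'" using eq by simp
    hence "b = b'" using h h' c' aa unfolding H_def off_def by (cases b; cases b'; cases a; cases "u$c'") simp_all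
    thus ?thesis using aa eq by simp
  qed
  have cov: "C \<subseteq> (\<lambda>(h,a,b). h + off a b) ` (H \<times> UNIV \<times> UNIV)"
  proof
    fix y assume y: "y \<in> C"
    define y1 where "y1 = y + (y$c) *s u"
    define h where "h = y1 + (y1$c') *s w'"
    have y1C: "y1 \<in> C" unfolding y1_def C_def
      by (rule cos_add[OF sub y[unfolded C_def]]) (rule vec.subspace_scale[OF sub u(1)])
    have hC: "h \<in> C" unfolding h_def C_def
      by (rule cos_add[OF sub y1C[unfolded C_def]]) (rule vec.subspace_scale[OF sub w'W])
    have hc: "h$c = 0" unfolding h_def y1_def using c w'c by simp
    have hc': "h$c' = 0" unfolding h_def using c' by simp
    have ye: "y = h + off (y$c) (y1$c')" unfolding h_def y1_def off_def
      by (simp add: vec_eq_iff algebra_simps)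
    have hH: "(h, y$c, y1$c') \<in> H \<times> UNIV \<times> UNIV" using hC hc hc' unfolding H_def by simp
    show "y \<in> (\<lambda>(h,a,b). h + off a b) ` (H \<times> UNIV \<times> UNIV)"
      by (rule image_eqI[OF _ hH]) (simp add: ye[symmetric])
  qed
  have "card C \<le> card ((\<lambda>(h,a,b). h + off a b) ` (H \<times> (UNIV::bit set) \<times> (UNIV::bit set)))"
    by (rule card_mono[OF _ cov]) simp
  also have "\<dots> \<le> card (H \<times> (UNIV::bit set) \<times> (UNIV::bit set))" by (rule card_image_le) simp
  also have "\<dots> = card H * 4" by (simp add: card_cartesian_product card_UNIV_bit)
  finally have mH: "m \<le> 2 * card H" using card_cos[of W x] cardW unfolding C_def by simp
  obtain H1 where H1: "H1 \<subseteq> H" "card H1 = (card Ka + 1) div 2"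
    using obtain_subset_with_card_n[of "(card Ka + 1) div 2" H] mH cK by force
  have "(card Kb + 1) div 2 \<le> card (H - H1)"
    using H1 mH cK by (simp add: card_Diff_subset finite_subset)
  then obtain H2 where H2: "H2 \<subseteq> H - H1" "card H2 = (card Kb + 1) div 2"
    using obtain_subset_with_card_n[of "(card Kb + 1) div 2" "H - H1"] by force
  have "card Ka \<le> card (H1 \<times> (UNIV::bit set))"
    using H1 by (simp add: card_cartesian_product card_UNIV_bit)
  then obtain fa where fa: "fa ` Ka \<subseteq> H1 \<times> (UNIV::bit set)" "inj_on fa Ka"
    using card_le_inj[OF fin(1), of "H1 \<times> (UNIV::bit set)"] by auto
  have "card Kb \<le> card (H2 \<times> (UNIV::bit set))"
    using H2 by (simp add: card_cartesian_product card_UNIV_bit)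
  then obtain fb where fb: "fb ` Kb \<subseteq> H2 \<times> (UNIV::bit set)" "inj_on fb Kb"
    using card_le_inj[OF fin(2), of "H2 \<times> (UNIV::bit set)"] by auto
  define p where "p k = (if k \<in> Ka then fst (fa k) + off 0 (snd (fa k))
                         else fst (fb k) + off (snd (fb k)) 0)" for k
  have HC: "H \<subseteq> C" unfolding H_def by auto
  have pa: "k \<in> Ka \<Longrightarrow> p k = fst (fa k) + off 0 (snd (fa k)) \<and>
      p k + V k = fst (fa k) + off 1 (snd (fa k)) \<and> fst (fa k) \<in> H1" for k
    using Ka fa(1) unfolding p_def off_def by (auto simp: vec_eq_iff algebra_simps)
  have pb: "k \<in> Kb \<Longrightarrow> p k = fst (fb k) + off (snd (fb k)) 0 \<and>
      p k + V k = fst (fb k) + off (snd (fb k) + \<beta>) 1 \<and> fst (fb k) \<in> H2" for k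
    using Kb fb(1) dj wdec unfolding p_def off_def by (auto simp: vec_eq_iff algebra_simps)
  have H12: "H1 \<subseteq> H" "H2 \<subseteq> H" "H1 \<inter> H2 = {}" using H1 H2 by auto
  have "good (Ka \<union> Kb) V p C"
    unfolding good_def
  proof (intro conjI ballI impI)
    fix k assume k: "k \<in> Ka \<union> Kb"
    have "\<exists>h a b a' b'. h \<in> H \<and> p k = h + off a b \<and> p k + V k = h + off a' b'"
      using pa pb k H12 by blast
    then obtain h a b a' b' where hh: "h \<in> H" "p k = h + off a b" "p k + V k = h + off a' b'" by blast
    have hC: "h \<in> cos W x" using hh(1) HC unfolding C_def by auto
    show "p k \<in> C" unfolding hh(2) C_def by (rule cos_add[OF sub hC offW])
    show "p k + V k \<in> C" unfolding hh(3) C_def by (rule cos_add[OF sub hC offW])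
  next
    fix k k' assume k: "k \<in> Ka \<union> Kb" and k': "k' \<in> Ka \<union> Kb" and ne: "k \<noteq> k'"
    show "{p k, p k + V k} \<inter> {p k', p k' + V k'} = {}"
    proof (rule ccontr)
      assume "{p k, p k + V k} \<inter> {p k', p k' + V k'} \<noteq> {}"
      hence ex: "p k = p k' \<or> p k = p k' + V k' \<or> p k + V k = p k' \<or> p k + V k = p k' + V k'"
        by auto
      consider "k \<in> Ka" "k' \<in> Ka" | "k \<in> Ka" "k' \<in> Kb" | "k \<in> Kb" "k' \<in> Ka" | "k \<in> Kb" "k' \<in> Kb"
        using k k' by blast
      thus False
      proof cases
        case 1
        obtain h e where he: "fa k = (h,e)" by (cases "fa k")
        obtain h' e' where he': "fa k' = (h',e')" by (cases "fa k'")
        have P: "p k = h + off 0 e" "p k + V k = h + off 1 e" "h \<in> H" using pa[OF 1(1)] he H12 by auto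
        have P': "p k' = h' + off 0 e'" "p k' + V k' = h' + off 1 e'" "h' \<in> H" using pa[OF 1(2)] he' H12 by auto
        have "\<exists>a a'. h + off a e = h' + off a' e'" using ex[unfolded P(2) P'(2), unfolded P(1) P'(1)] by blast
        then obtain a a' where "h + off a e = h' + off a' e'" by blast
        hence "h = h' \<and> e = e'" using key P(3) P'(3) by blast
        hence "fa k = fa k'" using he he' by simp
        thus False using fa(2) 1 ne by (auto simp: inj_on_def)
      next
        case 2
        obtain h e where he: "fa k = (h,e)" by (cases "fa k")
        obtain h' e' where he': "fb k' = (h',e')" by (cases "fb k'")
        have P: "p k = h + off 0 e" "p k + V k = h + off 1 e" "h \<in> H1" using pa[OF 2(1)] he by auto
        have P': "p k' = h' + off e' 0" "p k' + V k' = h' + off (e' + \<beta>) 1" "h' \<in> H2" using pb[OF 2(2)] he' by auto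
        have "\<exists>a b a' b'. h + off a b = h' + off a' b'" using ex[unfolded P(2) P'(2), unfolded P(1) P'(1)] by blast
        then obtain a b a' b' where "h + off a b = h' + off a' b'" by blast
        hence "h = h'" using key P(3) P'(3) H12 by blast
        thus False using P(3) P'(3) H12 by blast
      next
        case 3
        obtain h e where he: "fb k = (h,e)" by (cases "fb k")
        obtain h' e' where he': "fa k' = (h',e')" by (cases "fa k'")
        have P: "p k = h + off e 0" "p k + V k = h + off (e + \<beta>) 1" "h \<in> H2" using pb[OF 3(1)] he by auto
        have P': "p k' = h' + off 0 e'" "p k' + V k' = h' + off 1 e'" "h' \<in> H1" using pa[OF 3(2)] he' by auto
        have "\<exists>a b a' b'. h + off a b = h' + off a' b'" using ex[unfolded P(2) P'(2), unfolded P(1) P'(1)] by blast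
        then obtain a b a' b' where "h + off a b = h' + off a' b'" by blast
        hence "h = h'" using key P(3) P'(3) H12 by blast
        thus False using P(3) P'(3) H12 by blast
      next
        case 4
        obtain h e where he: "fb k = (h,e)" by (cases "fb k")
        obtain h' e' where he': "fb k' = (h',e')" by (cases "fb k'")
        have P: "p k = h + off e 0" "p k + V k = h + off (e + \<beta>) 1" "h \<in> H" using pb[OF 4(1)] he H12 by auto
        have P': "p k' = h' + off e' 0" "p k' + V k' = h' + off (e' + \<beta>) 1" "h' \<in> H" using pb[OF 4(2)] he' H12 by auto
        have "h + off e 0 = h' + off e' 0 \<or> h + off e 0 = h' + off (e' + \<beta>) 1 \<or>
              h + off (e + \<beta>) 1 = h' + off e' 0 \<or> h + off (e + \<beta>) 1 = h' + off (e' + \<beta>) 1"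
          using ex[unfolded P(2) P'(2), unfolded P(1) P'(1)] by blast
        hence "h = h' \<and> e = e'"
        proof (elim disjE)
          assume "h + off e 0 = h' + off e' 0" thus ?thesis using key P(3) P'(3) by blast
        next
          assume "h + off e 0 = h' + off (e' + \<beta>) 1" thus ?thesis using key[of h e 0 h' "e' + \<beta>" 1] P(3) P'(3) by simp
        next
          assume "h + off (e + \<beta>) 1 = h' + off e' 0" thus ?thesis using key[of h "e + \<beta>" 1 h' e' 0] P(3) P'(3) by simp
        next
          assume "h + off (e + \<beta>) 1 = h' + off (e' + \<beta>) 1"
          hence "h = h' \<and> e + \<beta> = e' + \<beta>" using key P(3) P'(3) by blast
          thus ?thesis by (metis add_right_cancel)
        qed
        hence "fb k = fb k'" using he he' by simp
        thus False using fb(2) 4 ne by (auto simp: inj_on_def)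
      qed
    qed
  qed
  thus ?thesis unfolding C_def by blast
qed



lemma coset_pick:
  assumes "vec.subspace W" "C \<in> range (cos W)" "\<K> \<subseteq> range (cos W)" "C \<notin> \<K>"
  shows "C \<inter> \<Union>\<K> = {}"
  using cosets_disj[OF assms(1), of "{C}" \<K>] assms by auto

lemma LB:
  assumes sub: "vec.subspace W" and cardW: "card W = 2*m" and m1: "1 \<le> m"
    and u: "u \<in> W" "u \<noteq> 0" and w: "w \<in> W" "w \<noteq> 0"
  shows "\<forall>Ka Kb \<K>. \<K> \<subseteq> range (cos W) \<and> finite Ka \<and> finite Kb \<and> Ka \<inter> Kb = {} \<and>
     (\<forall>k\<in>Ka. V k = u) \<and> (\<forall>k\<in>Kb. V k = w) \<and> card Ka + card Kb = N \<and> N < card \<K> * m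
     \<longrightarrow> (\<exists>p. good (Ka \<union> Kb) V p (\<Union>\<K>))"
proof (induction N rule: less_induct)
  case (less N)
  show ?case
  proof (intro allI impI, elim conjE)
    fix Ka Kb \<K>
    assume K: "\<K> \<subseteq> range (cos W)" and fa: "finite Ka" and fb: "finite Kb" and dj: "Ka \<inter> Kb = {}"
      and Va: "\<forall>k\<in>Ka. V k = u" and Vb: "\<forall>k\<in>Kb. V k = w" and cN: "card Ka + card Kb = N"
      and lt: "N < card \<K> * m"
    have fK: "finite \<K>" by simp
    have "\<K> \<noteq> {}" using lt by auto
    then obtain C where C: "C \<in> \<K>" by blast
    obtain x where Cx: "C = cos W x" using C K by auto
    have CK: "C \<inter> \<Union>(\<K> - {C}) = {}"
      by (rule coset_pick[OF sub]) (use C K in auto)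
    have cK1: "card (\<K> - {C}) = card \<K> - 1" using C by simp
    have mult1: "(card \<K> - 1) * m = card \<K> * m - m" by (simp add: diff_mult_distrib)
    have UK: "C \<union> \<Union>(\<K> - {C}) = \<Union>\<K>" using C by auto
    show "\<exists>p. good (Ka \<union> Kb) V p (\<Union>\<K>)"
    proof (cases "m \<le> card Ka")
      case True
      then obtain Ka1 where Ka1: "Ka1 \<subseteq> Ka" "card Ka1 = m" "finite Ka1"
        using obtain_subset_with_card_n by metis
      obtain p1 where p1: "good Ka1 V p1 C"
        using P1[OF sub u cardW, of Ka1 V x] Va Ka1 Cx by auto
      have h1: "card (Ka - Ka1) + card Kb < N" using Ka1 cN m1 fa True by (simp add: card_Diff_subset)
      have h2: "card (Ka - Ka1) + card Kb < card (\<K> - {C}) * m"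
        using Ka1 cN lt True fa cK1 mult1 by (simp add: card_Diff_subset)
      have "\<exists>p. good ((Ka - Ka1) \<union> Kb) V p (\<Union>(\<K> - {C}))"
        by (rule less.IH[OF h1, rule_format, where Ka="Ka - Ka1" and Kb=Kb and \<K>="\<K> - {C}"]) (use K fa fb dj Va Vb h2 in auto)
      then obtain p2 where p2: "good ((Ka - Ka1) \<union> Kb) V p2 (\<Union>(\<K> - {C}))" by blast
      have "good (Ka1 \<union> ((Ka - Ka1) \<union> Kb)) V (\<lambda>k. if k \<in> Ka1 then p1 k else p2 k) (C \<union> \<Union>(\<K> - {C}))"
        by (rule good_union[OF p1 p2]) (use dj CK Ka1 in auto)
      moreover have "Ka1 \<union> ((Ka - Ka1) \<union> Kb) = Ka \<union> Kb" using Ka1 by auto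
      ultimately show ?thesis using UK by auto
    next
      case False
      note F1 = False
      show ?thesis
      proof (cases "m \<le> card Kb")
        case True
        then obtain Kb1 where Kb1: "Kb1 \<subseteq> Kb" "card Kb1 = m" "finite Kb1"
          using obtain_subset_with_card_n by metis
        obtain p1 where p1: "good Kb1 V p1 C"
          using P1[OF sub w cardW, of Kb1 V x] Vb Kb1 Cx by auto
        have h1: "card Ka + card (Kb - Kb1) < N" using Kb1 cN m1 fb True by (simp add: card_Diff_subset)
        have h2: "card Ka + card (Kb - Kb1) < card (\<K> - {C}) * m"
          using Kb1 cN lt True fb cK1 mult1 by (simp add: card_Diff_subset)
        have "\<exists>p. good (Ka \<union> (Kb - Kb1)) V p (\<Union>(\<K> - {C}))"
          by (rule less.IH[OF h1, rule_format, where Ka=Ka and Kb="Kb - Kb1" and \<K>="\<K> - {C}"]) (use K fa fb dj Va Vb h2 in auto)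
        then obtain p2 where p2: "good (Ka \<union> (Kb - Kb1)) V p2 (\<Union>(\<K> - {C}))" by blast
        have "good (Kb1 \<union> (Ka \<union> (Kb - Kb1))) V (\<lambda>k. if k \<in> Kb1 then p1 k else p2 k) (C \<union> \<Union>(\<K> - {C}))"
          by (rule good_union[OF p1 p2]) (use dj CK Kb1 in auto)
        moreover have "Kb1 \<union> (Ka \<union> (Kb - Kb1)) = Ka \<union> Kb" using Kb1 by auto
        ultimately show ?thesis using UK by auto
      next
        case False
        note F2 = False
        show ?thesis
        proof (cases "card Ka + card Kb < m")
          case True
          have "\<exists>p. good (Ka \<union> Kb) V p C"
          proof (cases "u = w")
            case True
            show ?thesis
              using P1[OF sub u cardW, of "Ka \<union> Kb" V x] Va Vb True Cx fa fb
                \<open>card Ka + card Kb < m\<close> card_Un_le[of Ka Kb] by auto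
          next
            case False
            show ?thesis
              using P2[OF sub u w False cardW Va Vb fa fb dj, of x] Cx \<open>card Ka + card Kb < m\<close> by auto
          qed
          then obtain p where "good (Ka \<union> Kb) V p C" by blast
          hence "good (Ka \<union> Kb) V p (\<Union>\<K>)" by (rule good_mono) (use C in auto)
          thus ?thesis by blast
        next
          case False
          have "1 < card \<K>"
          proof (rule ccontr)
            assume "\<not> 1 < card \<K>"
            hence "card \<K> * m \<le> m" by (cases "card \<K>") auto
            thus False using False lt cN by linarith
          qed
          hence "\<K> - {C} \<noteq> {}" using C by (metis cK1 card.empty less_numeral_extra(3) zero_less_diff)
          then obtain D where D: "D \<in> \<K>" "D \<noteq> C" by blast
          obtain y where Dy: "D = cos W y" using D K by auto
          obtain p1 where p1: "good Ka V p1 C"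
            using P1[OF sub u cardW, of Ka V x] Va Cx fa F1 by auto
          obtain p2 where p2: "good Kb V p2 D"
            using P1[OF sub w cardW, of Kb V y] Vb Dy fb F2 by auto
          have "C \<inter> D = {}" using CK D by auto
          hence "good (Ka \<union> Kb) V (\<lambda>k. if k \<in> Ka then p1 k else p2 k) (C \<union> D)" by (rule good_union[OF p1 p2 dj])
          hence "good (Ka \<union> Kb) V (\<lambda>k. if k \<in> Ka then p1 k else p2 k) (\<Union>\<K>)" by (rule good_mono) (use C D in auto)
          thus ?thesis by blast
        qed
      qed
    qed
  qed
qed



lemma LA:
  assumes sub: "vec.subspace W" and cardW: "card W = 2*m" and m1: "1 \<le> m"
  shows "\<forall>\<K>. \<K> \<subseteq> range (cos W) \<and> (\<forall>i<s. v i \<in> W \<and> v i \<noteq> 0) \<and>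
     (\<Sum>i<s. a i) + ((s+1) div 2) * m \<le> card \<K> * m
     \<longrightarrow> (\<exists>p. good {(i,j). i<s \<and> j<a i} (\<lambda>k. v (fst k)) p (\<Union>\<K>))"
proof (induction s rule: less_induct)
  case (less s)
  show ?case
  proof (intro allI impI, elim conjE)
    fix \<K> assume K: "\<K> \<subseteq> range (cos W)" and vW: "\<forall>i<s. v i \<in> W \<and> v i \<noteq> 0"
      and bnd: "(\<Sum>i<s. a i) + ((s+1) div 2) * m \<le> card \<K> * m"
    let ?G = "\<exists>p. good {(i,j). i<s \<and> j<a i} (\<lambda>k. v (fst k)) p (\<Union>\<K>)"
    have "s = 0 \<or> s = 1 \<or> (\<exists>r. s = r + 2)" by presburger
    moreover
    { assume s0: "s = 0"
      hence "{(i,j). i<s \<and> j<a i} = {}" by auto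
      hence ?G using good_empty by metis }
    moreover
    { assume s1: "s = 1"
      have keys: "{(i,j). i<s \<and> j<a i} = ({0} \<times> {..<a 0}) \<union> {}" using s1 by auto
      have "a 0 < card \<K> * m" using bnd s1 m1 by simp
      have "\<exists>p. good (({0} \<times> {..<a 0}) \<union> {}) (\<lambda>k. v (fst k)) p (\<Union>\<K>)"
        by (rule LB[OF sub cardW m1, of "v 0" "v 0" "\<lambda>k. v (fst k)" "a 0", rule_format,
             where Ka="{0} \<times> {..<a 0}" and Kb="{}" and \<K>=\<K>])
           (use vW s1 K \<open>a 0 < card \<K> * m\<close> in \<open>auto simp: card_cartesian_product\<close>)
      hence ?G unfolding keys . }
    moreover
    { fix r assume sr: "s = r + 2"
      define Ka where "Ka = {r} \<times> {..<a r}"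
      define Kb where "Kb = {r+1} \<times> {..<a (r+1)}"
      define A where "A = a r + a (r+1)"
      define k where "k = A div m + 1"
      have km: "k * m \<le> A + m" unfolding k_def by (simp add: div_times_less_eq_dividend)
      have Ak: "A < k * m"
      proof -
        have e1: "A div m * m + A mod m = A" by (rule div_mult_mod_eq)
        have e2: "A mod m < m" using m1 by simp
        have e3: "k * m = A div m * m + m" by (simp add: k_def)
        show ?thesis using e1 e2 e3 by linarith
      qed
      have sumS: "(\<Sum>i<s. a i) = (\<Sum>i<r. a i) + A" unfolding sr A_def by simp
      have half: "(s + 1) div 2 = (r + 1) div 2 + 1" unfolding sr by simp
      have bnd2: "(\<Sum>i<r. a i) + A + m + ((r+1) div 2) * m \<le> card \<K> * m"
        using bnd unfolding sumS half by (simp add: algebra_simps)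
      have "k * m \<le> card \<K> * m" using km bnd2 by linarith
      hence kK: "k \<le> card \<K>" using m1 by simp
      then obtain \<K>1 where K1: "\<K>1 \<subseteq> \<K>" "card \<K>1 = k" using obtain_subset_with_card_n by metis
      have vr: "v r \<in> W" "v r \<noteq> 0" "v (r+1) \<in> W" "v (r+1) \<noteq> 0" using vW sr by auto
      have g1: "\<exists>p. good (Ka \<union> Kb) (\<lambda>k. v (fst k)) p (\<Union>\<K>1)"
        by (rule LB[OF sub cardW m1 vr, of "\<lambda>k. v (fst k)" A, rule_format,
             where Ka=Ka and Kb=Kb and \<K>=\<K>1])
           (use K K1 Ak in \<open>auto simp: Ka_def Kb_def card_cartesian_product A_def\<close>)
      have cK: "card (\<K> - \<K>1) = card \<K> - k" using K1 by (simp add: card_Diff_subset)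
      have "(\<Sum>i<r. a i) + ((r+1) div 2) * m \<le> card (\<K> - \<K>1) * m"
        unfolding cK using bnd2 km by (simp add: diff_mult_distrib)
      hence g2: "\<exists>p. good {(i,j). i<r \<and> j<a i} (\<lambda>k. v (fst k)) p (\<Union>(\<K> - \<K>1))"
        by (intro less.IH[of r, rule_format, where \<K>="\<K> - \<K>1"] conjI) (use sr vW K in auto)
      obtain p1 where p1: "good (Ka \<union> Kb) (\<lambda>k. v (fst k)) p1 (\<Union>\<K>1)" using g1 by blast
      obtain p2 where p2: "good {(i,j). i<r \<and> j<a i} (\<lambda>k. v (fst k)) p2 (\<Union>(\<K> - \<K>1))" using g2 by blast
      have dK: "\<Union>\<K>1 \<inter> \<Union>(\<K> - \<K>1) = {}"
        by (rule cosets_disj[OF sub]) (use K K1 in auto)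
      have "good ((Ka \<union> Kb) \<union> {(i,j). i<r \<and> j<a i}) (\<lambda>k. v (fst k))
              (\<lambda>k. if k \<in> Ka \<union> Kb then p1 k else p2 k) (\<Union>\<K>1 \<union> \<Union>(\<K> - \<K>1))"
        by (rule good_union[OF p1 p2 _ dK]) (auto simp: Ka_def Kb_def)
      moreover have "(Ka \<union> Kb) \<union> {(i,j). i<r \<and> j<a i} = {(i,j). i<s \<and> j<a i}"
        unfolding Ka_def Kb_def sr by (auto simp: less_Suc_eq)
      moreover have "\<Union>\<K>1 \<union> \<Union>(\<K> - \<K>1) = \<Union>\<K>" using K1 by auto
      ultimately have ?G by auto }
    ultimately show ?G by blast
  qed
qed



lemma serves_from_good:
  fixes g :: "nat \<Rightarrow> bit^'n"
  assumes sg: "simplex_gen g" and nz: "\<forall>i<s. v i \<noteq> 0"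
    and gd: "good {(i,j). i<s \<and> j<a i} (\<lambda>k. v (fst k)) p S"
  shows "serves (2 ^ CARD('n) - 1) g s v a"
proof -
  let ?N = "2 ^ CARD('n) - 1 :: nat"
  have bij: "bij_betw g {1..?N} {x. x \<noteq> 0}" using sg unfolding simplex_gen_def by simp
  define R where "R i j = {l \<in> {1..?N}. g l \<in> {p (i,j), p (i,j) + v i}}" for i j
  have dis: "\<forall>i<s. \<forall>j<a i. \<forall>i'<s. \<forall>j'<a i'. (i, j) \<noteq> (i', j') \<longrightarrow>
      {p (i,j), p (i,j) + v i} \<inter> {p (i',j'), p (i',j') + v i'} = {}"
  proof (intro allI impI)
    fix i j i' j' assume h: "i < s" "j < a i" "i' < s" "j' < a i'" "(i, j) \<noteq> (i', j')"
    have gd2: "\<forall>k\<in>{(i,j). i<s \<and> j<a i}. \<forall>k'\<in>{(i,j). i<s \<and> j<a i}. k \<noteq> k' \<longrightarrow>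
       {p k, p k + v (fst k)} \<inter> {p k', p k' + v (fst k')} = {}" using gd unfolding good_def by (rule conjunct2)
    show "{p (i,j), p (i,j) + v i} \<inter> {p (i',j'), p (i',j') + v i'} = {}"
      using gd2[rule_format, of "(i,j)" "(i',j')"] h by simp
  qed
  show ?thesis unfolding serves_def
  proof (rule exI[of _ R], intro conjI allI impI)
    fix i j assume i: "i < s" and j: "j < a i"
    show "R i j \<subseteq> {1..?N}" by (auto simp: R_def)
    let ?P = "{p (i,j), p (i,j) + v i} - {0}"
    have img: "g ` R i j = ?P"
    proof
      show "g ` R i j \<subseteq> ?P" using bij unfolding R_def bij_betw_def by auto
      show "?P \<subseteq> g ` R i j"
      proof
        fix y assume y: "y \<in> ?P"
        hence "y \<in> g ` {1..?N}" using bij unfolding bij_betw_def by auto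
        then obtain l where "l \<in> {1..?N}" "y = g l" by blast
        thus "y \<in> g ` R i j" using y unfolding R_def by auto
      qed
    qed
    have b2: "bij_betw g (R i j) ?P" by (rule bij_betw_subset[OF bij _ img]) (auto simp: R_def)
    have "(\<Sum>l\<in>R i j. g l) = (\<Sum>x\<in>?P. x)" using sum.reindex_bij_betw[OF b2, of id] by simp
    also have "\<dots> = v i"
    proof -
      have vi: "v i \<noteq> 0" using nz i by simp
      consider "p (i,j) = 0" | "p (i,j) = v i" | "p (i,j) \<noteq> 0" "p (i,j) \<noteq> v i" by blast
      thus ?thesis
      proof cases
        case 1 hence "?P = {v i}" using vi by auto
        thus ?thesis by simp
      next
        case 2 hence "?P = {v i}" using vi by auto
        thus ?thesis by simp
      next
        case 3
        have ne: "p (i,j) + v i \<noteq> 0"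
        proof
          assume "p (i,j) + v i = 0"
          hence "p (i,j) + v i + v i = v i" by simp
          thus False using 3 by simp
        qed
        have ne2: "p (i,j) \<noteq> p (i,j) + v i"
        proof
          assume "p (i,j) = p (i,j) + v i"
          hence "p (i,j) + p (i,j) = p (i,j) + (p (i,j) + v i)" by simp
          thus False using vi by simp
        qed
        have "?P = {p (i,j), p (i,j) + v i}" using 3 ne by auto
        thus ?thesis using ne2 by simp
      qed
    qed
    finally show "(\<Sum>l\<in>R i j. g l) = v i" .
  next
    fix i j i' j' assume "i < s" "j < a i" "i' < s" "j' < a i'" "(i, j) \<noteq> (i', j')"
    hence "{p (i,j), p (i,j) + v i} \<inter> {p (i',j'), p (i',j') + v i'} = {}" using dis by blast
    thus "R i j \<inter> R i' j' = {}" unfolding R_def by blast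
  qed
qed

lemma ceil_half: "nat \<lceil>real s / 2\<rceil> = (s + 1) div 2"
proof -
  have "s = 2 * (s div 2) \<or> s = 2 * (s div 2) + 1" by presburger
  then obtain q where q: "s = 2*q \<or> s = 2*q + 1" by blast
  thus ?thesis
  proof
    assume "s = 2*q"
    thus ?thesis by simp
  next
    assume s: "s = 2*q + 1"
    have "\<lceil>real s / 2\<rceil> = int q + 1"
      by (rule ceiling_unique) (simp_all add: s)
    thus ?thesis using s by simp
  qed
qed

lemma part2:
  fixes g :: "nat \<Rightarrow> bit ^ 'n"
  assumes sg: "simplex_gen g" and s1: "1 \<le> s" and hv: "\<forall>i<s. v i \<noteq> 0 \<and> 1 \<le> a i"
    and ht: "(\<Sum>i<s. a i) = t"
    and hd: "vec.dim (vec.span (v ` {..<s})) = s'"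
    and tb: "t \<le> 2 ^ (CARD('n) - 1) - nat \<lceil>real s / 2\<rceil> * 2 ^ (s' - 1)"
  shows "serves (2 ^ CARD('n) - 1) g s v a"
proof -
  define W where "W = vec.span (v ` {..<s})"
  have sub: "vec.subspace W" unfolding W_def by (rule vec.subspace_span)
  have cW: "card W = 2 ^ s'" using card_subspace[OF sub] hd unfolding W_def by simp
  have vW: "\<forall>i<s. v i \<in> W \<and> v i \<noteq> 0"
  proof (intro allI impI conjI)
    fix i assume i: "i < s"
    have "v i \<in> v ` {..<s}" using i by simp
    thus "v i \<in> W" unfolding W_def by (rule vec.span_base)
    show "v i \<noteq> 0" using hv i by simp
  qed
  have s0: "0 < s" using s1 by simp
  have v0: "v 0 \<in> W" "v 0 \<noteq> 0" using vW s0 by blast+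
  have "{0, v 0} \<subseteq> W" using v0(1) vec.subspace_0[OF sub] by simp
  hence "card {0, v 0} \<le> card W" by (rule card_mono[rotated]) simp
  moreover have "card {0, v 0} = 2" using v0(2) by simp
  ultimately have "2 \<le> card W" by simp
  hence s'1: "1 \<le> s'" using cW by (cases s') auto
  define m where "m = (2::nat) ^ (s' - 1)"
  have cardW: "card W = 2 * m" unfolding m_def cW using s'1 by (cases s') auto
  have m1: "1 \<le> m" unfolding m_def by simp
  define n where "n = CARD('n)"
  have n1: "1 \<le> n" unfolding n_def by (simp add: Suc_leI)
  have cc: "card W * card (range (cos W)) = 2 ^ n" using card_cosets[OF sub] unfolding n_def .
  have "(2::nat) ^ n = 2 * 2 ^ (n - 1)" using n1 by (cases n) auto
  hence cm: "card (range (cos W)) * m = 2 ^ (n - 1)" using cc cardW by (simp add: mult.commute)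
  have "a 0 \<le> t" unfolding ht[symmetric] using s1 by (intro member_le_sum) auto
  moreover have "1 \<le> a 0" using hv s0 by blast
  ultimately have t1: "1 \<le> t" by linarith
  have tt: "t + ((s+1) div 2) * m \<le> card (range (cos W)) * m"
  proof -
    have "t \<le> card (range (cos W)) * m - ((s+1) div 2) * m"
      using tb unfolding ceil_half n_def[symmetric] m_def[symmetric] cm[symmetric] .
    thus ?thesis using t1 by linarith
  qed
  have "\<exists>p. good {(i,j). i<s \<and> j<a i} (\<lambda>k. v (fst k)) p (\<Union>(range (cos W)))"
    by (rule LA[OF sub cardW m1, rule_format, where \<K>="range (cos W)"]) (use vW ht tt in auto)
  then obtain p where "good {(i,j). i<s \<and> j<a i} (\<lambda>k. v (fst k)) p (\<Union>(range (cos W)))" by blast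
  moreover have "\<forall>i<s. v i \<noteq> 0" using hv by simp
  ultimately show ?thesis using serves_from_good[OF sg] by blast
qed

theorem mainTheorem11:
  fixes g :: "nat \<Rightarrow> bit ^ 'n"
  assumes "simplex_gen g"
  shows "\<forall>s :: nat. 1 \<le> s \<and> real s \<le> real CARD('n) - ln (real CARD('n)) \<longrightarrow>
     functional_batch (2 ^ CARD('n) - 1) g s
        (2 ^ (CARD('n) - 1) - nat \<lceil>real s / 2\<rceil> * 2 ^ (s - 1))
   \<and> (\<forall>(v :: nat \<Rightarrow> bit ^ 'n) (a :: nat \<Rightarrow> nat) t s'.
        (\<forall>i<s. v i \<noteq> 0 \<and> 1 \<le> a i) \<and> (\<Sum>i<s. a i) = t \<and>
        vec.dim (vec.span (v ` {..<s})) = s' \<and>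
        t \<le> 2 ^ (CARD('n) - 1) - nat \<lceil>real s / 2\<rceil> * 2 ^ (s' - 1)
        \<longrightarrow> serves (2 ^ CARD('n) - 1) g s v a)"
proof (intro allI impI, rule conjI)
  fix s :: nat assume hs: "1 \<le> s \<and> real s \<le> real CARD('n) - ln (real CARD('n))"
  show "\<forall>(v :: nat \<Rightarrow> bit ^ 'n) (a :: nat \<Rightarrow> nat) t s'.
        (\<forall>i<s. v i \<noteq> 0 \<and> 1 \<le> a i) \<and> (\<Sum>i<s. a i) = t \<and>
        vec.dim (vec.span (v ` {..<s})) = s' \<and>
        t \<le> 2 ^ (CARD('n) - 1) - nat \<lceil>real s / 2\<rceil> * 2 ^ (s' - 1)
        \<longrightarrow> serves (2 ^ CARD('n) - 1) g s v a"
  proof (intro allI impI, elim conjE)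
    fix v :: "nat \<Rightarrow> bit ^ 'n" and a :: "nat \<Rightarrow> nat" and t s'
    assume "\<forall>i<s. v i \<noteq> 0 \<and> 1 \<le> a i" "(\<Sum>i<s. a i) = t" "vec.dim (vec.span (v ` {..<s})) = s'"
      "t \<le> 2 ^ (CARD('n) - 1) - nat \<lceil>real s / 2\<rceil> * 2 ^ (s' - 1)"
    thus "serves (2 ^ CARD('n) - 1) g s v a" by (rule part2[OF assms conjunct1[OF hs]])
  qed
  show "functional_batch (2 ^ CARD('n) - 1) g s
        (2 ^ (CARD('n) - 1) - nat \<lceil>real s / 2\<rceil> * 2 ^ (s - 1))"
    unfolding functional_batch_def
  proof (intro allI impI, elim conjE)
    fix v :: "nat \<Rightarrow> bit ^ 'n" and a :: "nat \<Rightarrow> nat"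
    assume hv: "\<forall>i<s. v i \<noteq> 0 \<and> 1 \<le> a i"
      and ht: "(\<Sum>i<s. a i) = 2 ^ (CARD('n) - 1) - nat \<lceil>real s / 2\<rceil> * 2 ^ (s - 1)"
    define s' where "s' = vec.dim (vec.span (v ` {..<s}))"
    have "s' = vec.dim (v ` {..<s})" unfolding s'_def by (rule vec.dim_span)
    also have "\<dots> \<le> card (v ` {..<s})" by (rule vec.dim_le_card') simp
    also have "\<dots> \<le> s" using card_image_le[of "{..<s}" v] by simp
    finally have "s' \<le> s" .
    hence "(2::nat) ^ (s' - 1) \<le> 2 ^ (s - 1)" by (intro power_increasing) auto
    hence "nat \<lceil>real s / 2\<rceil> * 2 ^ (s' - 1) \<le> nat \<lceil>real s / 2\<rceil> * 2 ^ (s - 1)"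
      by (rule mult_le_mono2)
    hence "(\<Sum>i<s. a i) \<le> 2 ^ (CARD('n) - 1) - nat \<lceil>real s / 2\<rceil> * 2 ^ (s' - 1)"
      unfolding ht by (rule diff_le_mono2)
    thus "serves (2 ^ CARD('n) - 1) g s v a"
      by (rule part2[OF assms conjunct1[OF hs] hv refl s'_def[symmetric]])
  qed
qed


end
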